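(* There exists a fully-dynamic bin packing algorithm under general movement costs with asymptotic competitive ratio $2$ and additive term $1+\log_2 n$, using constant worst-case recourse, where $n$ is the maximum number of items present at any time and is known to the algorithm in advance.
   Context: Fully-dynamic bin packing: items (size $s_i\in[0,1]$, arbitrary movement cost $c_i\ge0$) are inserted and deleted; at each time $t$ the algorithm maintains a packing of the current items $\mathcal{I}_t$ into unit bins, paying $c_i$ each time it moves item $i$. It has asymptotic competitive ratio $\alpha'$ with additive term $\beta$ if it always uses at most $\alpha'\cdot OPT(\mathcal{I}_t)+\beta$ bins ($OPT$ the optimal number of bins), and worst-case recourse $\gamma$ if at each update it incurs movement cost at most $\gamma\cdot c_t$, $c_t$ being the cost of the item updated. *)

theory Defs
  imports Complex_Main
begin

text \<open>Items are identified by natural numbers. An update inserts an item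
  (identifier, size, movement cost) or deletes a present item.\<close>
datatype update = Ins nat real real | Del nat

fun apply_upd :: "(nat \<rightharpoonup> real \<times> real) \<Rightarrow> update \<Rightarrow> (nat \<rightharpoonup> real \<times> real)" where
  "apply_upd M (Ins i s c) = M(i \<mapsto> (s, c))"
| "apply_upd M (Del i) = M(i := None)"

definition current :: "update list \<Rightarrow> (nat \<rightharpoonup> real \<times> real)" where
  "current us = foldl apply_upd Map.empty us"

definition item_size :: "(nat \<rightharpoonup> real \<times> real) \<Rightarrow> nat \<Rightarrow> real" where
  "item_size M i = fst (the (M i))"

definition item_cost :: "(nat \<rightharpoonup> real \<times> real) \<Rightarrow> nat \<Rightarrow> real" where
  "item_cost M i = snd (the (M i))"

fun legal :: "(nat \<rightharpoonup> real \<times> real) \<Rightarrow> update \<Rightarrow> bool" where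
  "legal M (Ins i s c) = (i \<notin> dom M \<and> 0 \<le> s \<and> s \<le> 1 \<and> 0 \<le> c)"
| "legal M (Del i) = (i \<in> dom M)"

definition valid_seq :: "update list \<Rightarrow> bool" where
  "valid_seq us = (\<forall>k < length us. legal (current (take k us)) (us ! k))"

fun upd_cost :: "(nat \<rightharpoonup> real \<times> real) \<Rightarrow> update \<Rightarrow> real" where
  "upd_cost M (Ins i s c) = c"
| "upd_cost M (Del i) = item_cost M i"

text \<open>A packing assigns each item a bin (a natural number); only the
  assignment of present items matters.\<close>
type_synonym packing = "nat \<Rightarrow> nat"

definition feasible :: "(nat \<rightharpoonup> real \<times> real) \<Rightarrow> packing \<Rightarrow> bool" where
  "feasible M P = (\<forall>b. (\<Sum>i \<in> {i \<in> dom M. P i = b}. item_size M i) \<le> 1)"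

definition bins_used :: "(nat \<rightharpoonup> real \<times> real) \<Rightarrow> packing \<Rightarrow> nat" where
  "bins_used M P = card (P ` dom M)"

definition OPT :: "(nat \<rightharpoonup> real \<times> real) \<Rightarrow> nat" where
  "OPT M = (LEAST k. \<exists>P. feasible M P \<and> bins_used M P = k)"

definition move_cost :: "(nat \<rightharpoonup> real \<times> real) \<Rightarrow> packing \<Rightarrow> (nat \<rightharpoonup> real \<times> real) \<Rightarrow> packing \<Rightarrow> real" where
  "move_cost M0 P0 M1 P1 = (\<Sum>i \<in> {i \<in> dom M0 \<inter> dom M1. P0 i \<noteq> P1 i}. item_cost M1 i)"

definition bounded_by :: "nat \<Rightarrow> update list \<Rightarrow> bool" where
  "bounded_by n us = (\<forall>k \<le> length us. card (dom (current (take k us))) \<le> n)"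

end

theory Submission
  imports Defs "HOL-Library.Nat_Bijection"
begin


fun idx :: "nat list \<Rightarrow> nat \<Rightarrow> nat" where
  "idx [] x = 0"
| "idx (y # ys) x = (if y = x then 0 else Suc (idx ys x))"

lemma idx_append1: "x \<in> set xs \<Longrightarrow> idx (xs @ ys) x = idx xs x"
  by (induction xs) auto

lemma idx_append2: "x \<notin> set xs \<Longrightarrow> idx (xs @ ys) x = length xs + idx ys x"
  by (induction xs) auto

lemma idx_less: "x \<in> set xs \<Longrightarrow> idx xs x < length xs"
  by (induction xs) auto

lemma nth_idx: "x \<in> set xs \<Longrightarrow> xs ! idx xs x = x"
  by (induction xs) auto

lemma inj_idx: "inj_on (idx xs) (set xs)"
  by (metis inj_onI nth_idx)

definition moved :: "nat list \<Rightarrow> nat list \<Rightarrow> nat set" where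
  "moved xs xs' = {y \<in> set xs \<inter> set xs'. idx xs y \<noteq> idx xs' y}"

lemma split_last_group:
  fixes f :: "nat \<Rightarrow> real"
  assumes "sorted_wrt (\<lambda>a b. f b \<le> f a) xs" "xs \<noteq> []"
  shows "\<exists>ys g w. xs = ys @ g \<and> g \<noteq> [] \<and> (\<forall>e\<in>set g. f e = w) \<and> (\<forall>e\<in>set ys. w < f e)"
  using assms
proof (induction xs)
  case Nil then show ?case by simp
next
  case (Cons a rest)
  show ?case
  proof (cases "rest = []")
    case True
    then show ?thesis by (intro exI[of _ "[]"] exI[of _ "[a]"] exI[of _ "f a"]) auto
  next
    case False
    from Cons have s: "sorted_wrt (\<lambda>a b. f b \<le> f a) rest" and ge: "\<forall>e\<in>set rest. f e \<le> f a" by auto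
    from Cons.IH[OF s False] obtain ys g w where d: "rest = ys @ g" "g \<noteq> []" "\<forall>e\<in>set g. f e = w" "\<forall>e\<in>set ys. w < f e" by blast
    have "w \<le> f a" using d ge by (metis Un_iff last_in_set set_append)
    show ?thesis
    proof (cases "f a = w")
      case True
      then have "ys = []" using d ge by (metis list.set_intros(1) Un_iff neq_Nil_conv not_le set_append)
      then show ?thesis using d True by (intro exI[of _ "[]"] exI[of _ "a # g"] exI[of _ w]) auto
    next
      case False
      then show ?thesis using d \<open>w \<le> f a\<close> by (intro exI[of _ "a # ys"] exI[of _ g] exI[of _ w]) auto
    qed
  qed
qed



lemma sorted_const: "(\<forall>e\<in>set g. f e = (w::real)) \<Longrightarrow> sorted_wrt (\<lambda>a b. f b \<le> f a) g"
  by (induction g) auto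

lemma sorted_app_const:
  "sorted_wrt (\<lambda>a b. f b \<le> f a) ys \<Longrightarrow> (\<forall>e\<in>set g. f e = (w::real)) \<Longrightarrow> (\<forall>e\<in>set ys. w < f e)
   \<Longrightarrow> sorted_wrt (\<lambda>a b. f b \<le> f a) (ys @ g)"
  by (auto simp: sorted_wrt_append intro!: sorted_const less_imp_le)


lemma del_lemma:
  fixes f :: "nat \<Rightarrow> real"
  shows "distinct xs \<Longrightarrow> sorted_wrt (\<lambda>a b. f b \<le> f a) xs \<Longrightarrow> x \<in> set xs \<Longrightarrow>
    \<exists>xs'. distinct xs' \<and> set xs' = set xs - {x} \<and> sorted_wrt (\<lambda>a b. f b \<le> f a) xs' \<and>
      (\<exists>T. moved xs xs' \<subseteq> T \<and> T \<subseteq> set xs - {x} \<and> inj_on f T \<and> (\<forall>y\<in>T. f y \<le> f x))"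
proof (induction "length xs" arbitrary: xs rule: less_induct)
  case less
  have "xs \<noteq> []" using less by auto
  from split_last_group[OF less(3) this] obtain ys g w where
    d: "xs = ys @ g" "g \<noteq> []" "\<forall>e\<in>set g. f e = w" "\<forall>e\<in>set ys. w < f e" by blast
  have sys: "sorted_wrt (\<lambda>a b. f b \<le> f a) ys" using less(3) d(1) by (simp add: sorted_wrt_append)
  show ?case
  proof (cases "x \<in> set g")
    case True
    then obtain g1 g2 where g: "g = g1 @ x # g2" by (meson split_list)
    show ?thesis
    proof (cases "g2 = []")
      case True
      let ?xs' = "ys @ g1"
      have xsd: "xs = ?xs' @ [x]" using d g True by simp
      have "\<forall>e\<in>set ?xs'. idx xs e = idx ?xs' e" unfolding xsd using idx_append1[of _ ?xs' "[x]"] by blast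
      then have "moved xs ?xs' = {}" unfolding moved_def by auto
      moreover have "set ?xs' = set xs - {x}" using less(2) xsd by auto
      moreover have "distinct ?xs'" using less(2) xsd by auto
      moreover have "sorted_wrt (\<lambda>a b. f b \<le> f a) ?xs'" using less(3) xsd by (simp add: sorted_wrt_append)
      ultimately show ?thesis by (intro exI[of _ ?xs'] conjI exI[of _ "{}"]) auto
    next
      case False
      let ?z = "last g2"
      let ?xs' = "ys @ g1 @ ?z # butlast g2"
      have g2: "g2 = butlast g2 @ [?z]" using False by simp
      have xsd: "xs = (ys @ g1 @ [x]) @ butlast g2 @ [?z]" using d(1) g append_butlast_last_id[OF False] by simp
      have dist: "distinct ((ys @ g1 @ [x]) @ butlast g2 @ [?z])" using less(2) xsd by simp
      have zg: "?z \<in> set g" using g False by simp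
      have "moved xs ?xs' \<subseteq> {?z}"
      proof
        fix e assume e: "e \<in> moved xs ?xs'"
        show "e \<in> {?z}"
        proof (rule ccontr)
          assume nz: "e \<notin> {?z}"
          from e have ein: "e \<in> set ?xs'" and neq: "idx xs e \<noteq> idx ?xs' e" unfolding moved_def by auto
          show False
          proof (cases "e \<in> set (ys @ g1)")
            case True
            have "idx xs e = idx (ys @ g1) e" using idx_append1[OF True, of "[x] @ butlast g2 @ [?z]"] xsd by simp
            moreover have "idx ?xs' e = idx (ys @ g1) e" using idx_append1[OF True, of "?z # butlast g2"] by simp
            ultimately show False using neq by simp
          next
            case False
            then have eb: "e \<in> set (butlast g2)" using ein nz by auto
            have n1: "e \<notin> set (ys @ g1 @ [x])" using dist eb by auto
            have "idx xs e = length (ys @ g1 @ [x]) + idx (butlast g2 @ [?z]) e"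
              unfolding xsd using n1 by (rule idx_append2)
            moreover have "idx (butlast g2 @ [?z]) e = idx (butlast g2) e" using eb by (rule idx_append1)
            moreover have "?xs' = (ys @ g1 @ [?z]) @ butlast g2" by simp
            moreover have "e \<notin> set (ys @ g1 @ [?z])" using False nz by auto
            ultimately show False using neq idx_append2[of e "ys @ g1 @ [?z]" "butlast g2"] by simp
          qed
        qed
      qed
      moreover have "set ?xs' = set xs - {x}" using dist unfolding xsd by auto
      moreover have "distinct ?xs'" using dist by auto
      moreover have "sorted_wrt (\<lambda>a b. f b \<le> f a) ?xs'"
      proof -
        have "set (g1 @ ?z # butlast g2) \<subseteq> set g" using g False by (auto dest: in_set_butlastD)
        then have "\<forall>e\<in>set (g1 @ ?z # butlast g2). f e = w" using d(3) by blast
        then show ?thesis using sorted_app_const[OF sys _ d(4)] by simp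
      qed
      moreover have "?z \<in> set xs - {x}" using dist unfolding xsd by auto
      moreover have "f ?z \<le> f x" using d(3) zg True by auto
      ultimately show ?thesis
        by (intro exI[of _ ?xs'] conjI exI[of _ "{?z}"]) auto
    qed
  next
    case False
    then have xys: "x \<in> set ys" using less(4) d(1) by auto
    have "length ys < length xs" using d by simp
    moreover have "distinct ys" using less(2) d(1) by simp
    ultimately obtain ys' T0 where ih: "distinct ys'" "set ys' = set ys - {x}" "sorted_wrt (\<lambda>a b. f b \<le> f a) ys'"
      "moved ys ys' \<subseteq> T0" "T0 \<subseteq> set ys - {x}" "inj_on f T0" "\<forall>y\<in>T0. f y \<le> f x"
      using less(1) xys sys by blast
    let ?z = "last g"
    let ?xs' = "ys' @ ?z # butlast g"
    have gd: "g = butlast g @ [?z]" using d by simp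
    have xsd: "xs = ys @ butlast g @ [?z]" using d(1) append_butlast_last_id[OF d(2)] by simp
    have dist: "distinct (ys @ butlast g @ [?z])" using less(2) xsd by simp
    have zg: "?z \<in> set g" using d(2) by simp
    have lys': "length ys' = length ys - 1"
    proof -
      have "card (set ys') = card (set ys) - 1" using ih(2) xys by simp
      then show ?thesis using ih(1) \<open>distinct ys\<close> by (simp add: distinct_card)
    qed
    have ly: "length ys \<ge> 1" using xys by (cases ys) auto
    have "moved xs ?xs' \<subseteq> insert ?z T0"
    proof
      fix e assume e: "e \<in> moved xs ?xs'"
      from e have ein: "e \<in> set ?xs'" and neq: "idx xs e \<noteq> idx ?xs' e" unfolding moved_def by auto
      show "e \<in> insert ?z T0"
      proof (rule ccontr)
        assume nz: "e \<notin> insert ?z T0"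
        show False
        proof (cases "e \<in> set ys'")
          case True
          then have ey: "e \<in> set ys" using ih(2) by auto
          then have "idx xs e = idx ys e" unfolding xsd by (rule idx_append1)
          moreover have "idx ?xs' e = idx ys' e" using True by (rule idx_append1)
          moreover have "e \<notin> moved ys ys'" using nz ih(4) by auto
          ultimately show False using neq True ey unfolding moved_def by auto
        next
          case False
          then have eb: "e \<in> set (butlast g)" using ein nz by auto
          have nys: "e \<notin> set ys" using dist eb by auto
          have "idx xs e = length ys + idx (butlast g @ [?z]) e" unfolding xsd using nys by (rule idx_append2)
          also have "\<dots> = length ys + idx (butlast g) e" using eb by (simp add: idx_append1)
          finally have 1: "idx xs e = length ys + idx (butlast g) e" .
          have n2: "e \<notin> set (ys' @ [?z])" using False nz by auto
          have "?xs' = (ys' @ [?z]) @ butlast g" by simp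
          then have "idx ?xs' e = length (ys' @ [?z]) + idx (butlast g) e"
            using idx_append2[OF n2, of "butlast g"] by simp
          then show False using 1 neq lys' ly by simp
        qed
      qed
    qed
    moreover have "set ?xs' = set xs - {x}"
    proof -
      have "x \<notin> set (butlast g @ [?z])" using dist xys by auto
      then show ?thesis unfolding xsd using ih(2) by auto
    qed
    moreover have "distinct ?xs'" using ih(1,2) dist by auto
    moreover have "sorted_wrt (\<lambda>a b. f b \<le> f a) ?xs'"
    proof -
      have "set (?z # butlast g) \<subseteq> set g" using zg by (auto dest: in_set_butlastD)
      then have "\<forall>e\<in>set (?z # butlast g). f e = w" using d(3) by blast
      moreover have "\<forall>e\<in>set ys'. w < f e" using d(4) ih(2) by auto
      ultimately show ?thesis using sorted_app_const[OF ih(3)] by blast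
    qed
    moreover have "insert ?z T0 \<subseteq> set xs - {x}" using ih(5) dist xys unfolding xsd by auto
    moreover have "inj_on f (insert ?z T0)"
    proof -
      have "f ?z = w" using d(3) zg by simp
      moreover have "\<forall>y\<in>T0. w < f y" using ih(5) d(4) by auto
      ultimately have "f ?z \<notin> f ` T0" by auto
      then show ?thesis using ih(6) by auto
    qed
    moreover have "\<forall>y\<in>insert ?z T0. f y \<le> f x" using ih(7) d(3,4) xys zg by (auto intro: less_imp_le)
    ultimately show ?thesis by (intro exI[of _ ?xs'] conjI exI[of _ "insert ?z T0"]) auto
  qed
qed


lemma ins_lemma:
  fixes f :: "nat \<Rightarrow> real"
  shows "distinct xs \<Longrightarrow> sorted_wrt (\<lambda>a b. f b \<le> f a) xs \<Longrightarrow> x \<notin> set xs \<Longrightarrow>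
    \<exists>xs'. distinct xs' \<and> set xs' = insert x (set xs) \<and> sorted_wrt (\<lambda>a b. f b \<le> f a) xs' \<and>
      (\<exists>T. moved xs xs' \<subseteq> T \<and> T \<subseteq> set xs \<and> inj_on f T \<and> (\<forall>y\<in>T. f y \<le> f x))"
proof (induction "length xs" arbitrary: xs rule: less_induct)
  case less
  show ?case
  proof (cases "xs = []")
    case True
    then show ?thesis by (intro exI[of _ "[x]"] conjI exI[of _ "{}"]) (auto simp: moved_def)
  next
    case False
    from split_last_group[OF less(3) False] obtain ys g w where
      d: "xs = ys @ g" "g \<noteq> []" "\<forall>e\<in>set g. f e = w" "\<forall>e\<in>set ys. w < f e" by blast
    have sys: "sorted_wrt (\<lambda>a b. f b \<le> f a) ys" using less(3) d(1) by (simp add: sorted_wrt_append)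
    show ?thesis
    proof (cases "f x \<le> w")
      case True
      let ?xs' = "xs @ [x]"
      have "\<forall>e\<in>set xs. idx xs e = idx ?xs' e" using idx_append1[of _ xs "[x]"] by auto
      then have "moved xs ?xs' = {}" unfolding moved_def by auto
      moreover have "sorted_wrt (\<lambda>a b. f b \<le> f a) ?xs'"
      proof -
        have "\<forall>e\<in>set xs. f x \<le> f e" using d True by (auto intro: order.trans less_imp_le)
        then show ?thesis using less(3) by (simp add: sorted_wrt_append)
      qed
      ultimately show ?thesis using less(2,4) by (intro exI[of _ ?xs'] conjI exI[of _ "{}"]) auto
    next
      case False
      then have wx: "w < f x" by simp
      have "length ys < length xs" using d by simp
      moreover have "distinct ys" using less(2) d(1) by simp
      moreover have "x \<notin> set ys" using less(4) d(1) by simp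
      ultimately obtain ys' T0 where ih: "distinct ys'" "set ys' = insert x (set ys)" "sorted_wrt (\<lambda>a b. f b \<le> f a) ys'"
        "moved ys ys' \<subseteq> T0" "T0 \<subseteq> set ys" "inj_on f T0" "\<forall>y\<in>T0. f y \<le> f x"
        using less(1) sys by blast
      let ?z = "hd g"
      let ?xs' = "ys' @ tl g @ [?z]"
      have xsd: "xs = ys @ [?z] @ tl g" using d(1,2) by simp
      have dist: "distinct (ys @ [?z] @ tl g)" using less(2) xsd by simp
      have zg: "?z \<in> set g" using d(2) by simp
      have lys': "length ys' = length ys + 1"
      proof -
        have "card (set ys') = card (set ys) + 1" using ih(2) \<open>x \<notin> set ys\<close> by simp
        then show ?thesis using ih(1) \<open>distinct ys\<close> by (simp add: distinct_card)
      qed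
      have "moved xs ?xs' \<subseteq> insert ?z T0"
      proof
        fix e assume e: "e \<in> moved xs ?xs'"
        from e have ein: "e \<in> set xs" and neq: "idx xs e \<noteq> idx ?xs' e" unfolding moved_def by auto
        show "e \<in> insert ?z T0"
        proof (rule ccontr)
          assume nz: "e \<notin> insert ?z T0"
          show False
          proof (cases "e \<in> set ys")
            case True
            then have ey: "e \<in> set ys'" using ih(2) by auto
            have "idx xs e = idx ys e" unfolding xsd using True by (rule idx_append1)
            moreover have "idx ?xs' e = idx ys' e" using ey by (rule idx_append1)
            moreover have "e \<notin> moved ys ys'" using nz ih(4) by auto
            ultimately show False using neq True ey unfolding moved_def by auto
          next
            case False
            then have eb: "e \<in> set (tl g)" using ein nz xsd by auto
            have "e \<notin> set (ys @ [?z])" using False nz by auto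
            then have "idx xs e = length (ys @ [?z]) + idx (tl g) e" using xsd idx_append2[of e "ys @ [?z]" "tl g"] by simp
            moreover have "e \<notin> set ys'" using ih(2) False \<open>x \<notin> set ys\<close> dist eb less(4) xsd by auto
            then have "idx ?xs' e = length ys' + idx (tl g @ [?z]) e" by (rule idx_append2)
            moreover have "idx (tl g @ [?z]) e = idx (tl g) e" using eb by (rule idx_append1)
            ultimately show False using neq lys' by simp
          qed
        qed
      qed
      moreover have "set ?xs' = insert x (set xs)" unfolding xsd using ih(2) by auto
      moreover have "distinct ?xs'"
      proof -
        have "x \<notin> set (tl g @ [?z])" using less(4) xsd by auto
        then show ?thesis using ih(1,2) dist by auto
      qed
      moreover have "sorted_wrt (\<lambda>a b. f b \<le> f a) ?xs'"
      proof -
        have "set (tl g @ [?z]) \<subseteq> set g" using zg by (auto dest: list.set_sel(2)[OF d(2)])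
        then have "\<forall>e\<in>set (tl g @ [?z]). f e = w" using d(3) by blast
        moreover have "\<forall>e\<in>set ys'. w < f e" using d(4) ih(2) wx by auto
        ultimately show ?thesis using sorted_app_const[OF ih(3)] by blast
      qed
      moreover have "insert ?z T0 \<subseteq> set xs" using ih(5) zg d(1) by auto
      moreover have "inj_on f (insert ?z T0)"
      proof -
        have "f ?z = w" using d(3) zg by simp
        moreover have "\<forall>y\<in>T0. w < f y" using ih(5) d(4) by auto
        ultimately have "f ?z \<notin> f ` T0" by auto
        then show ?thesis using ih(6) by auto
      qed
      moreover have "\<forall>y\<in>insert ?z T0. f y \<le> f x" using ih(7) d(3) wx zg by (auto intro: less_imp_le)
      ultimately show ?thesis by (intro exI[of _ ?xs'] conjI exI[of _ "insert ?z T0"]) auto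
    qed
  qed
qed



definition cv :: "real \<Rightarrow> real" where
  "cv c = (if 0 < c then 2 powr (of_int \<lfloor>log 2 c\<rfloor>) else 0)"

definition Qs :: "real set" where
  "Qs = insert 0 (range (\<lambda>m::int. 2 powr (of_int m)))"

lemma cv_Qs: "cv c \<in> Qs"
  unfolding cv_def Qs_def by auto

lemma cv_le: "0 \<le> c \<Longrightarrow> cv c \<le> c"
proof (cases "c > 0")
  case True
  have "2 powr (of_int \<lfloor>log 2 c\<rfloor>) \<le> 2 powr (log 2 c)"
    by (rule powr_mono) auto
  then show ?thesis using True unfolding cv_def by simp
qed (auto simp: cv_def)

lemma le_2cv: "0 \<le> c \<Longrightarrow> c \<le> 2 * cv c"
proof (cases "c > 0")
  case True
  have "log 2 c \<le> of_int \<lfloor>log 2 c\<rfloor> + 1" by linarith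
  then have "2 powr (log 2 c) \<le> 2 powr (of_int \<lfloor>log 2 c\<rfloor> + 1)"
    by (rule powr_mono) auto
  then show ?thesis using True unfolding cv_def by (simp add: powr_add)
qed (auto simp: cv_def)

lemma Qs_nonneg: "a \<in> Qs \<Longrightarrow> 0 \<le> a"
  unfolding Qs_def by auto

lemma Qs_half: "a \<in> Qs \<Longrightarrow> b \<in> Qs \<Longrightarrow> a < b \<Longrightarrow> 2 * a \<le> b"
proof -
  assume a: "a \<in> Qs" and b: "b \<in> Qs" and ab: "a < b"
  show ?thesis
  proof (cases "a = 0")
    case True then show ?thesis using Qs_nonneg[OF b] by simp
  next
    case False
    then obtain m where m: "a = 2 powr (of_int m)" using a unfolding Qs_def by auto
    have "b \<noteq> 0" using ab Qs_nonneg[OF a] by auto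
    then obtain k where k: "b = 2 powr (of_int k)" using b unfolding Qs_def by auto
    have "m < k" using ab m k by simp
    then have "m + 1 \<le> k" by simp
    then have "real_of_int (m + 1) \<le> of_int k" by (simp only: of_int_le_iff)
    then have "real_of_int m + 1 \<le> of_int k" by simp
    then have "(2::real) powr (real_of_int m + 1) \<le> 2 powr (real_of_int k)" by (rule powr_mono) auto
    then show ?thesis using m k by (simp add: powr_add)
  qed
qed

lemma Qs_sum_lt: "finite V \<Longrightarrow> V \<subseteq> Qs \<Longrightarrow> (\<forall>a\<in>V. a < w) \<Longrightarrow> w \<in> Qs \<Longrightarrow> sum id V \<le> w"
proof (induction V arbitrary: w rule: finite_linorder_max_induct)
  case empty
  then show ?case using Qs_nonneg by simp
next
  case (insert b A)
  have bq: "b \<in> Qs" using insert by auto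
  have "sum id A \<le> b" using insert.IH[of b] insert.hyps insert.prems bq by auto
  moreover have "b \<notin> A" using insert.hyps by auto
  moreover have "2 * b \<le> w" using Qs_half[OF bq insert.prems(3)] insert.prems(2) by auto
  ultimately show ?case using insert.hyps(1) by simp
qed

lemma Qs_sum_le: "finite V \<Longrightarrow> V \<subseteq> Qs \<Longrightarrow> (\<forall>a\<in>V. a \<le> w) \<Longrightarrow> w \<in> Qs \<Longrightarrow> sum id V \<le> 2 * w"
proof (cases "w = 0")
  case True
  assume "V \<subseteq> Qs" "\<forall>a\<in>V. a \<le> w"
  then have "\<forall>a\<in>V. a = 0" using True Qs_nonneg by force
  then show ?thesis using True sum.neutral[of V id] by simp
next
  case False
  assume h: "finite V" "V \<subseteq> Qs" "\<forall>a\<in>V. a \<le> w" "w \<in> Qs"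
  then obtain m where m: "w = 2 powr (of_int m)" using False unfolding Qs_def by auto
  have "2 * w = 2 powr (of_int (m + 1))" using m by (simp add: powr_add)
  then have "2 * w \<in> Qs" unfolding Qs_def by blast
  moreover have "\<forall>a\<in>V. a < 2 * w"
  proof
    fix a assume "a \<in> V"
    then have "a \<le> w" using h(3) by blast
    moreover have "0 < w" using Qs_nonneg[OF h(4)] False by simp
    ultimately show "a < 2 * w" by linarith
  qed
  ultimately show ?thesis using Qs_sum_lt[OF h(1,2)] by blast
qed

lemma cost_bound:
  fixes f g :: "nat \<Rightarrow> real"
  assumes "finite T" "inj_on f T" "\<forall>y\<in>T. f y \<le> w" "\<forall>y\<in>T. f y \<in> Qs" "w \<in> Qs" "\<forall>y\<in>T. g y \<le> 2 * f y"
  shows "sum g T \<le> 4 * w"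
proof -
  have "sum g T \<le> sum (\<lambda>y. 2 * f y) T" using assms(6) by (intro sum_mono) auto
  also have "\<dots> = 2 * sum f T" by (simp add: sum_distrib_left)
  also have "sum f T = sum id (f ` T)" using sum.reindex[OF assms(2), of id] by simp
  also have "sum id (f ` T) \<le> 2 * w" using Qs_sum_le[of "f ` T" w] assms by auto
  finally show ?thesis by simp
qed



definition tiny :: "nat \<Rightarrow> real \<Rightarrow> bool" where
  "tiny J s = (s \<le> 1 / 2 ^ Suc J)"

definition cls :: "real \<Rightarrow> nat" where
  "cls s = (LEAST j. 1 / 2 ^ Suc j < s)"

definition key :: "(nat \<rightharpoonup> real \<times> real) \<Rightarrow> nat \<Rightarrow> real" where
  "key M i = cv (item_cost M i)"

definition Inv :: "nat \<Rightarrow> (nat \<rightharpoonup> real \<times> real) \<Rightarrow> (nat \<Rightarrow> nat list) \<Rightarrow> bool" where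
  "Inv J M L = (finite (dom M) \<and>
     (\<forall>i\<in>dom M. 0 \<le> item_size M i \<and> item_size M i \<le> 1 \<and> 0 \<le> item_cost M i) \<and>
     (\<forall>j. distinct (L j) \<and> set (L j) = {i \<in> dom M. \<not> tiny J (item_size M i) \<and> cls (item_size M i) = j}
          \<and> sorted_wrt (\<lambda>a b. key M b \<le> key M a) (L j)))"

definition pack :: "nat \<Rightarrow> (nat \<rightharpoonup> real \<times> real) \<Rightarrow> (nat \<Rightarrow> nat list) \<Rightarrow> packing" where
  "pack J M L i = (if tiny J (item_size M i) then 0
     else Suc (prod_encode (cls (item_size M i), idx (L (cls (item_size M i))) i div 2 ^ cls (item_size M i))))"

lemma move_cost_le:
  assumes "\<forall>i\<in>dom M \<inter> dom M'. P i \<noteq> P' i \<longrightarrow> i \<in> T" "finite T" "T \<subseteq> dom M \<inter> dom M'"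
    "\<forall>i\<in>T. 0 \<le> item_cost M' i"
  shows "move_cost M P M' P' \<le> sum (item_cost M') T"
  unfolding move_cost_def
  by (rule sum_mono2) (use assms in auto)

lemma set_helper1: "(\<And>i. i \<in> A \<Longrightarrow> P' i = P i) \<Longrightarrow> \<not> P' x \<Longrightarrow> {i \<in> insert x A. P' i} = {i \<in> A. P i}"
  by auto

lemma set_helper2: "(\<And>i. i \<in> A \<Longrightarrow> P' i = P i) \<Longrightarrow> P' x \<Longrightarrow> {i \<in> insert x A. P' i} = insert x {i \<in> A. P i}"
  by auto

lemma set_helper3: "(\<And>i. i \<in> A \<Longrightarrow> i \<noteq> x \<Longrightarrow> P' i = P i) \<Longrightarrow> {i \<in> A - {x}. P' i} = {i \<in> A. P i} - {x}"
  by auto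

lemma Inv_empty: "Inv J Map.empty (\<lambda>_. [])"
  unfolding Inv_def by simp

lemma step_ex:
  assumes inv: "Inv J M L" and lg: "legal M u"
  shows "\<exists>L'. Inv J (apply_upd M u) L' \<and>
     move_cost M (pack J M L) (apply_upd M u) (pack J (apply_upd M u) L') \<le> 4 * upd_cost M u"
proof (cases u)
  case (Ins x s c)
  let ?M' = "M(x \<mapsto> (s, c))"
  have M': "apply_upd M u = ?M'" using Ins by simp
  have lx: "x \<notin> dom M" "0 \<le> s" "s \<le> 1" "0 \<le> c" using lg Ins by auto
  have same: "\<And>i. i \<in> dom M \<Longrightarrow> item_size ?M' i = item_size M i \<and> item_cost ?M' i = item_cost M i"
    using lx(1) by (auto simp: item_size_def item_cost_def)
  have sx: "item_size ?M' x = s" "item_cost ?M' x = c" by (auto simp: item_size_def item_cost_def)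
  have keq: "\<And>i. i \<in> dom M \<Longrightarrow> key ?M' i = key M i" using same by (simp add: key_def)
  have I1: "finite (dom M)" and I2: "\<forall>i\<in>dom M. 0 \<le> item_size M i \<and> item_size M i \<le> 1 \<and> 0 \<le> item_cost M i"
    and I3: "\<And>j. distinct (L j)" "\<And>j. set (L j) = {i \<in> dom M. \<not> tiny J (item_size M i) \<and> cls (item_size M i) = j}"
    "\<And>j. sorted_wrt (\<lambda>a b. key M b \<le> key M a) (L j)" using inv unfolding Inv_def by auto
  have sub: "\<And>j. set (L j) \<subseteq> dom M" using I3(2) by auto
  have sorted': "\<And>j. sorted_wrt (\<lambda>a b. key ?M' b \<le> key ?M' a) (L j)"
  proof -
    fix j
    show "sorted_wrt (\<lambda>a b. key ?M' b \<le> key ?M' a) (L j)"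
      by (rule sorted_wrt_mono_rel[OF _ I3(3)[of j]]) (metis keq sub subsetD)
  qed
  have I2': "\<forall>i\<in>dom ?M'. 0 \<le> item_size ?M' i \<and> item_size ?M' i \<le> 1 \<and> 0 \<le> item_cost ?M' i"
    using I2 same sx lx by auto
  show ?thesis
  proof (cases "tiny J s")
    case True
    have "Inv J ?M' L"
      unfolding Inv_def
    proof (intro conjI allI)
      show "finite (dom ?M')" using I1 by simp
      show "\<forall>i\<in>dom ?M'. 0 \<le> item_size ?M' i \<and> item_size ?M' i \<le> 1 \<and> 0 \<le> item_cost ?M' i" by (rule I2')
      fix j
      show "distinct (L j)" by (rule I3(1))
      show "sorted_wrt (\<lambda>a b. key ?M' b \<le> key ?M' a) (L j)" by (rule sorted')
      show "set (L j) = {i \<in> dom ?M'. \<not> tiny J (item_size ?M' i) \<and> cls (item_size ?M' i) = j}"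
      proof -
        have dM': "dom ?M' = insert x (dom M)" by simp
        have "{i \<in> dom ?M'. \<not> tiny J (item_size ?M' i) \<and> cls (item_size ?M' i) = j}
           = {i \<in> dom M. \<not> tiny J (item_size M i) \<and> cls (item_size M i) = j}"
          unfolding dM' by (rule set_helper1) (use same sx True in auto)
        then show ?thesis using I3(2)[of j] by simp
      qed
    qed
    moreover have "move_cost M (pack J M L) ?M' (pack J ?M' L) \<le> sum (item_cost ?M') {}"
      by (rule move_cost_le) (use same in \<open>auto simp: pack_def\<close>)
    ultimately show ?thesis using M' Ins lx by (intro exI[of _ L]) auto
  next
    case False
    let ?j = "cls s"
    have xn: "x \<notin> set (L ?j)" using sub lx(1) by auto
    obtain xs' T where ins: "distinct xs'" "set xs' = insert x (set (L ?j))"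
      "sorted_wrt (\<lambda>a b. key ?M' b \<le> key ?M' a) xs'"
      "moved (L ?j) xs' \<subseteq> T" "T \<subseteq> set (L ?j)" "inj_on (key ?M') T" "\<forall>y\<in>T. key ?M' y \<le> key ?M' x"
      using ins_lemma[OF I3(1) sorted' xn] by blast
    let ?L' = "L(?j := xs')"
    have "Inv J ?M' ?L'"
      unfolding Inv_def
    proof (intro conjI allI)
      show "finite (dom ?M')" using I1 by simp
      show "\<forall>i\<in>dom ?M'. 0 \<le> item_size ?M' i \<and> item_size ?M' i \<le> 1 \<and> 0 \<le> item_cost ?M' i" by (rule I2')
      fix j
      show "distinct (?L' j)" using I3(1) ins(1) by simp
      show "sorted_wrt (\<lambda>a b. key ?M' b \<le> key ?M' a) (?L' j)" using sorted' ins(3) by simp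
      show "set (?L' j) = {i \<in> dom ?M'. \<not> tiny J (item_size ?M' i) \<and> cls (item_size ?M' i) = j}"
      proof (cases "j = ?j")
        case True
        have dM': "dom ?M' = insert x (dom M)" by simp
        have "{i \<in> dom ?M'. \<not> tiny J (item_size ?M' i) \<and> cls (item_size ?M' i) = j}
           = insert x {i \<in> dom M. \<not> tiny J (item_size M i) \<and> cls (item_size M i) = j}"
          unfolding dM' by (rule set_helper2) (use same sx True False in auto)
        then show ?thesis using I3(2)[of j] ins(2) True by simp
      next
        case False
        have dM': "dom ?M' = insert x (dom M)" by simp
        have "{i \<in> dom ?M'. \<not> tiny J (item_size ?M' i) \<and> cls (item_size ?M' i) = j}
           = {i \<in> dom M. \<not> tiny J (item_size M i) \<and> cls (item_size M i) = j}"
          unfolding dM' by (rule set_helper1) (use same sx False in auto)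
        then show ?thesis using I3(2)[of j] False by simp
      qed
    qed
    moreover have "move_cost M (pack J M L) ?M' (pack J ?M' ?L') \<le> sum (item_cost ?M') T"
    proof (rule move_cost_le)
      show "finite T" using ins(5) finite_subset by blast
      show "T \<subseteq> dom M \<inter> dom ?M'" using ins(5) sub by auto
      show "\<forall>i\<in>T. 0 \<le> item_cost ?M' i" using ins(5) sub I2 same by fastforce
      show "\<forall>i\<in>dom M \<inter> dom ?M'. pack J M L i \<noteq> pack J ?M' ?L' i \<longrightarrow> i \<in> T"
      proof (intro ballI impI)
        fix i assume i: "i \<in> dom M \<inter> dom ?M'" and ne: "pack J M L i \<noteq> pack J ?M' ?L' i"
        have si: "item_size ?M' i = item_size M i" using same i by auto
        have pe: "pack J ?M' ?L' i = (if tiny J (item_size M i) then 0 else Suc (prod_encode (cls (item_size M i), idx (?L' (cls (item_size M i))) i div 2 ^ cls (item_size M i))))"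
          unfolding pack_def si by (rule refl)
        note ne2 = ne[unfolded pe]
        have nt: "\<not> tiny J (item_size M i)" using ne2 by (auto simp: pack_def)
        have cj: "cls (item_size M i) = ?j"
        proof (rule ccontr)
          assume cne: "cls (item_size M i) \<noteq> ?j"
          have eqL: "?L' (cls (item_size M i)) = L (cls (item_size M i))" using cne by (rule fun_upd_other)
          show False using ne2 unfolding eqL by (simp add: pack_def)
        qed
        have "idx (L ?j) i \<noteq> idx xs' i" using ne2 cj nt by (auto simp: pack_def)
        moreover have "i \<in> set (L ?j)" using I3(2)[of ?j] i nt cj by auto
        ultimately have "i \<in> moved (L ?j) xs'" unfolding moved_def using ins(2) by auto
        then show "i \<in> T" using ins(4) by auto
      qed
    qed
    moreover have "sum (item_cost ?M') T \<le> 4 * cv c"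
    proof (rule cost_bound[of T "key ?M'"])
      show "finite T" using ins(5) finite_subset by blast
      show "inj_on (key ?M') T" by (rule ins(6))
      show "\<forall>y\<in>T. key ?M' y \<le> cv c" using ins(7) sx by (simp add: key_def)
      show "\<forall>y\<in>T. key ?M' y \<in> Qs" by (simp add: key_def cv_Qs)
      show "cv c \<in> Qs" by (rule cv_Qs)
      show "\<forall>y\<in>T. item_cost ?M' y \<le> 2 * key ?M' y"
      proof
        fix y assume "y \<in> T"
        then have yd: "y \<in> dom M" using ins(5) sub by blast
        then have "0 \<le> item_cost ?M' y" using I2 same[OF yd] by simp
        then show "item_cost ?M' y \<le> 2 * key ?M' y" unfolding key_def by (rule le_2cv)
      qed
    qed
    moreover have "cv c \<le> c" using lx(4) by (rule cv_le)
    ultimately show ?thesis using M' Ins by (intro exI[of _ ?L']) auto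
  qed
next
  case (Del x)
  let ?M' = "M(x := None)"
  have M': "apply_upd M u = ?M'" using Del by simp
  have lx: "x \<in> dom M" using lg Del by auto
  have same: "\<And>i. i \<noteq> x \<Longrightarrow> item_size ?M' i = item_size M i \<and> item_cost ?M' i = item_cost M i"
    by (auto simp: item_size_def item_cost_def)
  have keq: "\<And>i. i \<noteq> x \<Longrightarrow> key ?M' i = key M i" using same by (simp add: key_def)
  have I1: "finite (dom M)" and I2: "\<forall>i\<in>dom M. 0 \<le> item_size M i \<and> item_size M i \<le> 1 \<and> 0 \<le> item_cost M i"
    and I3: "\<And>j. distinct (L j)" "\<And>j. set (L j) = {i \<in> dom M. \<not> tiny J (item_size M i) \<and> cls (item_size M i) = j}"
    "\<And>j. sorted_wrt (\<lambda>a b. key M b \<le> key M a) (L j)" using inv unfolding Inv_def by auto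
  have sub: "\<And>j. set (L j) \<subseteq> dom M" using I3(2) by auto
  have I2': "\<forall>i\<in>dom ?M'. 0 \<le> item_size ?M' i \<and> item_size ?M' i \<le> 1 \<and> 0 \<le> item_cost ?M' i"
    using I2 same by auto
  have cx: "upd_cost M u = item_cost M x" using Del by simp
  have c0: "0 \<le> item_cost M x" using I2 lx by auto
  show ?thesis
  proof (cases "tiny J (item_size M x)")
    case True
    have xn: "\<And>j. x \<notin> set (L j)" using I3(2) True by auto
    have "Inv J ?M' L"
      unfolding Inv_def
    proof (intro conjI allI)
      show "finite (dom ?M')" using I1 by simp
      show "\<forall>i\<in>dom ?M'. 0 \<le> item_size ?M' i \<and> item_size ?M' i \<le> 1 \<and> 0 \<le> item_cost ?M' i" by (rule I2')
      fix j
      show "distinct (L j)" by (rule I3(1))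
      show "sorted_wrt (\<lambda>a b. key ?M' b \<le> key ?M' a) (L j)"
        by (rule sorted_wrt_mono_rel[OF _ I3(3)[of j]]) (use xn keq in \<open>metis\<close>)
      show "set (L j) = {i \<in> dom ?M'. \<not> tiny J (item_size ?M' i) \<and> cls (item_size ?M' i) = j}"
      proof -
        have dM': "dom ?M' = dom M - {x}" by simp
        have "{i \<in> dom ?M'. \<not> tiny J (item_size ?M' i) \<and> cls (item_size ?M' i) = j}
           = {i \<in> dom M. \<not> tiny J (item_size M i) \<and> cls (item_size M i) = j} - {x}"
          unfolding dM' by (rule set_helper3) (use same in auto)
        then show ?thesis using I3(2)[of j] xn[of j] by auto
      qed
    qed
    moreover have "move_cost M (pack J M L) ?M' (pack J ?M' L) \<le> sum (item_cost ?M') {}"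
      by (rule move_cost_le) (use same in \<open>auto simp: pack_def\<close>)
    ultimately show ?thesis using M' cx c0 by (intro exI[of _ L]) auto
  next
    case False
    let ?j = "cls (item_size M x)"
    have xin: "x \<in> set (L ?j)" using I3(2) False lx by auto
    obtain xs' T where del: "distinct xs'" "set xs' = set (L ?j) - {x}"
      "sorted_wrt (\<lambda>a b. key M b \<le> key M a) xs'"
      "moved (L ?j) xs' \<subseteq> T" "T \<subseteq> set (L ?j) - {x}" "inj_on (key M) T" "\<forall>y\<in>T. key M y \<le> key M x"
      using del_lemma[OF I3(1) I3(3) xin] by blast
    let ?L' = "L(?j := xs')"
    have "Inv J ?M' ?L'"
      unfolding Inv_def
    proof (intro conjI allI)
      show "finite (dom ?M')" using I1 by simp
      show "\<forall>i\<in>dom ?M'. 0 \<le> item_size ?M' i \<and> item_size ?M' i \<le> 1 \<and> 0 \<le> item_cost ?M' i" by (rule I2')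
      fix j
      show "distinct (?L' j)" using I3(1) del(1) by simp
      have xn: "x \<notin> set (?L' j)" using del(2) I3(2) False by auto
      have "sorted_wrt (\<lambda>a b. key M b \<le> key M a) (?L' j)" using I3(3) del(3) by simp
      then show "sorted_wrt (\<lambda>a b. key ?M' b \<le> key ?M' a) (?L' j)"
        by (rule sorted_wrt_mono_rel[rotated]) (use xn keq in metis)
      show "set (?L' j) = {i \<in> dom ?M'. \<not> tiny J (item_size ?M' i) \<and> cls (item_size ?M' i) = j}"
      proof -
        have dM': "dom ?M' = dom M - {x}" by simp
        have "{i \<in> dom ?M'. \<not> tiny J (item_size ?M' i) \<and> cls (item_size ?M' i) = j}
           = {i \<in> dom M. \<not> tiny J (item_size M i) \<and> cls (item_size M i) = j} - {x}"
          unfolding dM' by (rule set_helper3) (use same in auto)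
        then show ?thesis using I3(2)[of j] del(2) False by (cases "j = ?j") auto
      qed
    qed
    moreover have "move_cost M (pack J M L) ?M' (pack J ?M' ?L') \<le> sum (item_cost ?M') T"
    proof (rule move_cost_le)
      show "finite T" using del(5) finite_subset by blast
      show "T \<subseteq> dom M \<inter> dom ?M'" using del(5) sub by auto
      show "\<forall>i\<in>T. 0 \<le> item_cost ?M' i" using del(5) sub I2 same by fastforce
      show "\<forall>i\<in>dom M \<inter> dom ?M'. pack J M L i \<noteq> pack J ?M' ?L' i \<longrightarrow> i \<in> T"
      proof (intro ballI impI)
        fix i assume i: "i \<in> dom M \<inter> dom ?M'" and ne: "pack J M L i \<noteq> pack J ?M' ?L' i"
        have ix: "i \<noteq> x" using i by auto
        have si: "item_size ?M' i = item_size M i" using same ix by auto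
        have pe: "pack J ?M' ?L' i = (if tiny J (item_size M i) then 0 else Suc (prod_encode (cls (item_size M i), idx (?L' (cls (item_size M i))) i div 2 ^ cls (item_size M i))))"
          unfolding pack_def si by (rule refl)
        note ne2 = ne[unfolded pe]
        have nt: "\<not> tiny J (item_size M i)" using ne2 by (auto simp: pack_def)
        have cj: "cls (item_size M i) = ?j"
        proof (rule ccontr)
          assume cne: "cls (item_size M i) \<noteq> ?j"
          have eqL: "?L' (cls (item_size M i)) = L (cls (item_size M i))" using cne by (rule fun_upd_other)
          show False using ne2 unfolding eqL by (simp add: pack_def)
        qed
        have "idx (L ?j) i \<noteq> idx xs' i" using ne2 cj nt by (auto simp: pack_def)
        moreover have "i \<in> set (L ?j)" using I3(2)[of ?j] i nt cj by auto
        ultimately have "i \<in> moved (L ?j) xs'" unfolding moved_def using del(2) ix by auto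
        then show "i \<in> T" using del(4) by auto
      qed
    qed
    moreover have "sum (item_cost ?M') T \<le> 4 * cv (item_cost M x)"
    proof (rule cost_bound[of T "key M"])
      show "finite T" using del(5) finite_subset by blast
      show "inj_on (key M) T" by (rule del(6))
      show "\<forall>y\<in>T. key M y \<le> cv (item_cost M x)" using del(7) by (simp add: key_def)
      show "\<forall>y\<in>T. key M y \<in> Qs" by (simp add: key_def cv_Qs)
      show "cv (item_cost M x) \<in> Qs" by (rule cv_Qs)
      show "\<forall>y\<in>T. item_cost ?M' y \<le> 2 * key M y"
      proof
        fix y assume "y \<in> T"
        then have yd: "y \<in> dom M" "y \<noteq> x" using del(5) sub by blast+
        then have "0 \<le> item_cost M y" using I2 by simp
        then have "item_cost M y \<le> 2 * key M y" unfolding key_def by (rule le_2cv)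
        then show "item_cost ?M' y \<le> 2 * key M y" using same[OF yd(2)] by simp
      qed
    qed
    moreover have "cv (item_cost M x) \<le> item_cost M x" using c0 by (rule cv_le)
    ultimately show ?thesis using M' cx by (intro exI[of _ ?L']) auto
  qed
qed



lemma cls_le: "\<not> tiny J s \<Longrightarrow> cls s \<le> J"
  unfolding cls_def tiny_def by (rule Least_le) simp

lemma cls_lower: "\<not> tiny J s \<Longrightarrow> 1 / 2 ^ Suc (cls s) < s"
  unfolding cls_def tiny_def by (rule LeastI[of _ J]) simp

lemma cls_upper: "\<not> tiny J s \<Longrightarrow> s \<le> 1 \<Longrightarrow> s \<le> 1 / 2 ^ cls s"
proof (cases "cls s")
  case 0
  assume "s \<le> 1" then show ?thesis using 0 by simp
next
  case (Suc m)
  assume nt: "\<not> tiny J s"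
  have "m < cls s" using Suc by simp
  then have "\<not> (1 / 2 ^ Suc m < s)" unfolding cls_def by (rule not_less_Least)
  then show ?thesis using Suc by simp
qed

lemma card_div_block:
  fixes K q :: nat
  assumes "K > 0"
  shows "card {p. p div K = q} \<le> K"
proof -
  have "{p. p div K = q} \<subseteq> {q * K..<q * K + K}"
  proof
    fix p assume "p \<in> {p. p div K = q}"
    then have "p div K = q" by simp
    moreover have "p div K * K + p mod K = p" by (rule div_mult_mod_eq)
    moreover have "p mod K < K" using assms by simp
    ultimately show "p \<in> {q * K..<q * K + K}" by auto
  qed
  then have "card {p. p div K = q} \<le> card {q * K..<q * K + K}" by (rule card_mono[rotated]) simp
  then show ?thesis by simp
qed

lemma finite_div_block:
  fixes K q :: nat
  assumes "K > 0"
  shows "finite {p. p div K = q}"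
proof -
  have "{p. p div K = q} \<subseteq> {..<q * K + K}"
  proof
    fix p assume "p \<in> {p. p div K = q}"
    then have "p div K = q" by simp
    moreover have "p div K * K + p mod K = p" by (rule div_mult_mod_eq)
    moreover have "p mod K < K" using assms by simp
    ultimately show "p \<in> {..<q * K + K}" by auto
  qed
  then show ?thesis by (rule finite_subset) simp
qed

lemma feasible_pack:
  assumes inv: "Inv J M L" and cn: "card (dom M) \<le> n" and nJ: "n \<le> 2 ^ Suc J"
  shows "feasible M (pack J M L)"
  unfolding feasible_def
proof
  fix b
  have I1: "finite (dom M)" and I2: "\<forall>i\<in>dom M. 0 \<le> item_size M i \<and> item_size M i \<le> 1 \<and> 0 \<le> item_cost M i"
    and I3: "\<And>j. distinct (L j)" "\<And>j. set (L j) = {i \<in> dom M. \<not> tiny J (item_size M i) \<and> cls (item_size M i) = j}"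
    using inv unfolding Inv_def by auto
  let ?A = "{i \<in> dom M. pack J M L i = b}"
  have finA: "finite ?A" using I1 by simp
  show "sum (item_size M) ?A \<le> 1"
  proof (cases b)
    case 0
    have "\<And>i. i \<in> ?A \<Longrightarrow> item_size M i \<le> 1 / 2 ^ Suc J"
      using 0 by (auto simp: pack_def tiny_def split: if_splits)
    then have "sum (item_size M) ?A \<le> real (card ?A) * (1 / 2 ^ Suc J)" by (rule sum_bounded_above)
    also have "\<dots> \<le> real n * (1 / 2 ^ Suc J)"
    proof -
      have "card ?A \<le> card (dom M)" using I1 by (intro card_mono) auto
      then have "card ?A \<le> n" using cn by simp
      then show ?thesis by (intro mult_right_mono) auto
    qed
    also have "\<dots> \<le> 1"
    proof -
      have "real n \<le> 2 ^ Suc J" using nJ by (metis of_nat_le_iff of_nat_numeral of_nat_power)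
      then show ?thesis by (simp add: field_simps)
    qed
    finally show ?thesis .
  next
    case (Suc k)
    obtain j q where jq: "prod_decode k = (j, q)" by (cases "prod_decode k") auto
    have mem: "cls (item_size M i) = j \<and> idx (L j) i div 2 ^ j = q \<and> i \<in> set (L j)" if "i \<in> ?A" for i
    proof -
      have nt: "\<not> tiny J (item_size M i)" using that Suc by (auto simp: pack_def split: if_splits)
      then have "prod_encode (cls (item_size M i), idx (L (cls (item_size M i))) i div 2 ^ cls (item_size M i)) = k"
        using that Suc by (simp add: pack_def)
      then have "prod_decode k = (cls (item_size M i), idx (L (cls (item_size M i))) i div 2 ^ cls (item_size M i))"
        by (metis prod_encode_inverse)
      then have "cls (item_size M i) = j" "idx (L j) i div 2 ^ j = q" using jq by auto
      moreover have "i \<in> set (L j)" using I3(2)[of j] that nt \<open>cls (item_size M i) = j\<close> by auto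
      ultimately show ?thesis by simp
    qed
    have "\<And>i. i \<in> ?A \<Longrightarrow> item_size M i \<le> 1 / 2 ^ j"
    proof -
      fix i assume i: "i \<in> ?A"
      have nt: "\<not> tiny J (item_size M i)" using i Suc by (auto simp: pack_def split: if_splits)
      have "item_size M i \<le> 1" using I2 i by auto
      then show "item_size M i \<le> 1 / 2 ^ j" using cls_upper[OF nt] mem[OF i] by simp
    qed
    then have "sum (item_size M) ?A \<le> real (card ?A) * (1 / 2 ^ j)" by (rule sum_bounded_above)
    also have "\<dots> \<le> 1"
    proof -
      have sub: "?A \<subseteq> set (L j)" using mem by blast
      have inj: "inj_on (idx (L j)) ?A" using inj_idx sub by (rule inj_on_subset)
      have "idx (L j) ` ?A \<subseteq> {p. p div 2 ^ j = q}" using mem by auto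
      then have "card (idx (L j) ` ?A) \<le> card {p. p div 2 ^ j = q}"
        by (rule card_mono[rotated]) (rule finite_div_block, simp)
      also have "\<dots> \<le> 2 ^ j" by (rule card_div_block) simp
      finally have "card ?A \<le> 2 ^ j" using card_image[OF inj] by simp
      then have "real (card ?A) \<le> 2 ^ j" by (metis of_nat_le_iff of_nat_numeral of_nat_power)
      then show ?thesis by (simp add: field_simps)
    qed
    finally show ?thesis .
  qed
qed



lemma size_le_OPT:
  assumes inv: "Inv J M L"
  shows "sum (item_size M) (dom M) \<le> real (OPT M)"
proof -
  have I1: "finite (dom M)" and I2: "\<forall>i\<in>dom M. 0 \<le> item_size M i \<and> item_size M i \<le> 1 \<and> 0 \<le> item_cost M i"
    using inv unfolding Inv_def by auto
  have "feasible M id"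
    unfolding feasible_def
  proof
    fix b
    show "sum (item_size M) {i \<in> dom M. id i = b} \<le> 1"
    proof (cases "b \<in> dom M")
      case True
      then have "{i \<in> dom M. id i = b} = {b}" by auto
      then show ?thesis using I2 True by simp
    next
      case False
      then have e: "{i \<in> dom M. id i = b} = {}" by auto
      show ?thesis unfolding e by simp
    qed
  qed
  then have "\<exists>k P. feasible M P \<and> bins_used M P = k" by blast
  then have "\<exists>P. feasible M P \<and> bins_used M P = OPT M"
    unfolding OPT_def by (rule LeastI_ex)
  then obtain P where P: "feasible M P" "bins_used M P = OPT M" by blast
  have "sum (item_size M) (dom M) = (\<Sum>b\<in>P ` dom M. sum (item_size M) {i \<in> dom M. P i = b})"
    using I1 by (rule sum.image_gen)
  also have "\<dots> \<le> (\<Sum>b\<in>P ` dom M. 1)"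
    using P(1) unfolding feasible_def by (intro sum_mono) auto
  also have "\<dots> = real (OPT M)" using P(2) unfolding bins_used_def by simp
  finally show ?thesis .
qed

lemma sum_one_minus: "(\<Sum>j\<le>J. 1 - 1 / (2::real) ^ j) \<le> real J"
proof (induction J)
  case 0 then show ?case by simp
next
  case (Suc J)
  have "(\<Sum>j\<le>Suc J. 1 - 1 / (2::real) ^ j) = (\<Sum>j\<le>J. 1 - 1 / (2::real) ^ j) + (1 - 1 / 2 ^ Suc J)"
    by simp
  also have "\<dots> \<le> real J + 1"
  proof -
    have "1 - 1 / (2::real) ^ Suc J \<le> 1" by simp
    then show ?thesis using Suc.IH by linarith
  qed
  finally show ?case by simp
qed

lemma card_div_image: "K > 0 \<Longrightarrow> card ((\<lambda>p. p div K) ` {..<N}) \<le> (N + K - 1) div K"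
proof -
  assume K: "K > 0"
  have "(\<lambda>p. p div K) ` {..<N} \<subseteq> {..<(N + K - 1) div K}"
  proof
    fix d assume "d \<in> (\<lambda>p. p div K) ` {..<N}"
    then obtain p where p: "p < N" "d = p div K" by auto
    have "(p + K) div K = p div K + 1" using K by simp
    moreover have "(p + K) div K \<le> (N + K - 1) div K" using p(1) by (intro div_le_mono) simp
    ultimately show "d \<in> {..<(N + K - 1) div K}" using p by simp
  qed
  then show ?thesis by (metis card_lessThan card_mono finite_lessThan)
qed

lemma real_ceil_div: "K > 0 \<Longrightarrow> real ((N + K - 1) div K) \<le> real N / real K + 1 - 1 / real K"
proof -
  assume K: "K > 0"
  have h: "(N + K - 1) div K * K \<le> N + K - 1" by simp
  have h2: "real ((N + K - 1) div K * K) \<le> real (N + K - 1)" using h by (simp only: of_nat_le_iff)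
  have h3: "real (N + K - 1) = real N + real K - 1" using K by (simp add: of_nat_diff)
  have "real ((N + K - 1) div K) * real K \<le> real N + real K - 1" using h2 h3 by simp
  then have "real ((N + K - 1) div K) \<le> (real N + real K - 1) / real K" using K by (simp add: le_divide_eq)
  also have "(real N + real K - 1) / real K = real N / real K + 1 - 1 / real K" using K by (simp add: field_simps)
  finally show ?thesis .
qed


lemma bins_pack:
  assumes inv: "Inv J M L"
  shows "real (bins_used M (pack J M L)) \<le> 2 * real (OPT M) + 1 + real J"
proof -
  have I1: "finite (dom M)" and I2: "\<forall>i\<in>dom M. 0 \<le> item_size M i \<and> item_size M i \<le> 1 \<and> 0 \<le> item_cost M i"
    and I3: "\<And>j. distinct (L j)" "\<And>j. set (L j) = {i \<in> dom M. \<not> tiny J (item_size M i) \<and> cls (item_size M i) = j}"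
    using inv unfolding Inv_def by auto
  define img where "img j = (\<lambda>p. Suc (prod_encode (j, p div 2 ^ j))) ` {..<length (L j)}" for j
  have sub: "pack J M L ` dom M \<subseteq> {0} \<union> (\<Union>j\<in>{..J}. img j)"
  proof
    fix b assume "b \<in> pack J M L ` dom M"
    then obtain i where i: "i \<in> dom M" "b = pack J M L i" by auto
    show "b \<in> {0} \<union> (\<Union>j\<in>{..J}. img j)"
    proof (cases "tiny J (item_size M i)")
      case True then show ?thesis using i by (simp add: pack_def)
    next
      case False
      let ?j = "cls (item_size M i)"
      have "?j \<le> J" using False by (rule cls_le)
      moreover have "i \<in> set (L ?j)" using I3(2)[of ?j] i False by auto
      then have "idx (L ?j) i < length (L ?j)" by (rule idx_less)
      then have "b \<in> img ?j" using i False unfolding img_def by (auto simp: pack_def)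
      ultimately show ?thesis by auto
    qed
  qed
  have cimg: "card (img j) \<le> (length (L j) + 2 ^ j - 1) div 2 ^ j" for j
  proof -
    have e: "img j = (\<lambda>d. Suc (prod_encode (j, d))) ` ((\<lambda>p. p div 2 ^ j) ` {..<length (L j)})"
      unfolding img_def by (simp add: image_image)
    have "card (img j) \<le> card ((\<lambda>p. p div 2 ^ j) ` {..<length (L j)})"
      unfolding e by (rule card_image_le) simp
    also have "\<dots> \<le> (length (L j) + 2 ^ j - 1) div 2 ^ j" by (rule card_div_image) simp
    finally show ?thesis .
  qed
  have "card (pack J M L ` dom M) \<le> card ({0} \<union> (\<Union>j\<in>{..J}. img j))"
    by (rule card_mono[OF _ sub]) (simp add: img_def)
  also have "\<dots> \<le> card {0::nat} + card (\<Union>j\<in>{..J}. img j)" by (rule card_Un_le)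
  also have "card (\<Union>j\<in>{..J}. img j) \<le> (\<Sum>j\<le>J. card (img j))" by (rule card_UN_le) simp
  also have "\<dots> \<le> (\<Sum>j\<le>J. (length (L j) + 2 ^ j - 1) div 2 ^ j)" by (rule sum_mono) (rule cimg)
  finally have c1: "card (pack J M L ` dom M) \<le> 1 + (\<Sum>j\<le>J. (length (L j) + 2 ^ j - 1) div 2 ^ j)" by simp
  have "real (card (pack J M L ` dom M)) \<le> real (1 + (\<Sum>j\<le>J. (length (L j) + 2 ^ j - 1) div 2 ^ j))"
    using c1 by (simp only: of_nat_le_iff)
  also have "\<dots> = 1 + (\<Sum>j\<le>J. real ((length (L j) + 2 ^ j - 1) div 2 ^ j))"
    by (simp only: of_nat_add of_nat_sum of_nat_1)
  also have "\<dots> \<le> 1 + (\<Sum>j\<le>J. real (length (L j)) / 2 ^ j + (1 - 1 / 2 ^ j))"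
  proof -
    have "real ((length (L j) + 2 ^ j - 1) div 2 ^ j) \<le> real (length (L j)) / 2 ^ j + (1 - 1 / 2 ^ j)" for j
      using real_ceil_div[of "2 ^ j" "length (L j)"] by simp
    then show ?thesis by (simp add: sum_mono)
  qed
  also have "\<dots> = 1 + (\<Sum>j\<le>J. real (length (L j)) / 2 ^ j) + (\<Sum>j\<le>J. 1 - 1 / (2::real) ^ j)"
    by (simp add: sum.distrib)
  also have "\<dots> \<le> 1 + (\<Sum>j\<le>J. real (length (L j)) / 2 ^ j) + real J"
    using sum_one_minus[of J] by simp
  also have "(\<Sum>j\<le>J. real (length (L j)) / 2 ^ j) \<le> (\<Sum>j\<le>J. 2 * sum (item_size M) (set (L j)))"
  proof (rule sum_mono)
    fix j
    have "\<And>i. i \<in> set (L j) \<Longrightarrow> 1 / 2 ^ Suc j \<le> item_size M i"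
      using I3(2)[of j] cls_lower by (auto intro: less_imp_le)
    then have "real (card (set (L j))) * (1 / 2 ^ Suc j) \<le> sum (item_size M) (set (L j))"
      by (rule sum_bounded_below)
    moreover have "card (set (L j)) = length (L j)" using I3(1) by (rule distinct_card)
    ultimately show "real (length (L j)) / 2 ^ j \<le> 2 * sum (item_size M) (set (L j))"
      by (simp add: field_simps)
  qed
  also have "(\<Sum>j\<le>J. 2 * sum (item_size M) (set (L j))) = 2 * sum (item_size M) (\<Union>j\<in>{..J}. set (L j))"
  proof -
    have "sum (item_size M) (\<Union>j\<in>{..J}. set (L j)) = (\<Sum>j\<le>J. sum (item_size M) (set (L j)))"
      by (rule sum.UNION_disjoint) (use I3(2) I1 in auto)
    then show ?thesis by (simp add: sum_distrib_left)
  qed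
  also have "sum (item_size M) (\<Union>j\<in>{..J}. set (L j)) \<le> sum (item_size M) (dom M)"
    by (rule sum_mono2[OF I1]) (use I3(2) I2 in auto)
  also have "\<dots> \<le> real (OPT M)" using inv by (rule size_le_OPT)
  finally show ?thesis unfolding bins_used_def by simp
qed



definition Jn :: "nat \<Rightarrow> nat" where
  "Jn n = (LEAST J. n \<le> 2 ^ Suc J)"

lemma Jn_spec: "n \<le> 2 ^ Suc (Jn n)"
  unfolding Jn_def
proof (rule LeastI[of _ n])
  have "n < 2 ^ n" by (rule less_exp)
  also have "(2::nat) ^ n \<le> 2 ^ Suc n" by simp
  finally show "n \<le> 2 ^ Suc n" by simp
qed

lemma Jn_log: "real (Jn n) \<le> log 2 (real n)"
proof (cases "Jn n")
  case 0
  show ?thesis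
  proof (cases "n = 0")
    case True then show ?thesis using 0 by (simp add: log_def)
  next
    case False then show ?thesis using 0 by simp
  qed
next
  case (Suc m)
  have "m < Jn n" using Suc by simp
  then have "\<not> n \<le> 2 ^ Suc m" unfolding Jn_def by (rule not_less_Least)
  then have lt: "2 ^ Jn n < n" using Suc by simp
  then have "(2::real) ^ Jn n < real n" by (metis of_nat_less_iff of_nat_numeral of_nat_power)
  then have "(2::real) powr real (Jn n) \<le> real n" by (simp add: powr_realpow)
  moreover have "0 < real n" using lt by simp
  ultimately show ?thesis by (simp add: le_log_iff)
qed

definition step :: "nat \<Rightarrow> (nat \<rightharpoonup> real \<times> real) \<Rightarrow> (nat \<Rightarrow> nat list) \<Rightarrow> update \<Rightarrow> (nat \<Rightarrow> nat list)" where
  "step J M L u = (SOME L'. Inv J (apply_upd M u) L' \<and>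
     move_cost M (pack J M L) (apply_upd M u) (pack J (apply_upd M u) L') \<le> 4 * upd_cost M u)"

definition st :: "nat \<Rightarrow> update list \<Rightarrow> (nat \<rightharpoonup> real \<times> real) \<times> (nat \<Rightarrow> nat list)" where
  "st J us = foldl (\<lambda>(M, L) u. (apply_upd M u, step J M L u)) (Map.empty, \<lambda>_. []) us"

lemma foldl_fst: "fst (foldl (\<lambda>(M, L) u. (apply_upd M u, step J M L u)) (M, L) us) = foldl apply_upd M us"
  by (induction us arbitrary: M L) auto

lemma st_fst: "fst (st J us) = current us"
  unfolding st_def current_def by (rule foldl_fst)

lemma st_snoc: "st J (us @ [u]) = (apply_upd (current us) u, step J (current us) (snd (st J us)) u)"
proof -
  obtain M L where hML: "st J us = (M, L)" by (cases "st J us") auto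
  have "M = current us" using st_fst[of J us] hML by simp
  then show ?thesis using hML unfolding st_def by simp
qed

lemma current_snoc: "current (us @ [u]) = apply_upd (current us) u"
  unfolding current_def by simp

lemma valid_snoc: "valid_seq (us @ [u]) \<Longrightarrow> valid_seq us \<and> legal (current us) u"
proof -
  assume v: "valid_seq (us @ [u])"
  have "valid_seq us" unfolding valid_seq_def
  proof (intro allI impI)
    fix k assume k: "k < length us"
    have "legal (current (take k (us @ [u]))) ((us @ [u]) ! k)" using v k unfolding valid_seq_def by simp
    then show "legal (current (take k us)) (us ! k)" using k by (simp add: nth_append)
  qed
  moreover have "legal (current us) u"
    using v unfolding valid_seq_def by (metis length_append_singleton lessI nth_append_length take_append take_all order_refl diff_self_eq_0 take0 append_Nil2)
  ultimately show ?thesis by simp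
qed

lemma step_prop:
  assumes "Inv J M L" "legal M u"
  shows "Inv J (apply_upd M u) (step J M L u) \<and>
     move_cost M (pack J M L) (apply_upd M u) (pack J (apply_upd M u) (step J M L u)) \<le> 4 * upd_cost M u"
  unfolding step_def using someI_ex[OF step_ex[OF assms]] .

lemma inv_st: "valid_seq us \<Longrightarrow> Inv J (current us) (snd (st J us))"
proof (induction us rule: rev_induct)
  case Nil
  then show ?case by (simp add: st_def current_def Inv_empty)
next
  case (snoc u us)
  then have v: "valid_seq us" "legal (current us) u" using valid_snoc by blast+
  then have "Inv J (current us) (snd (st J us))" using snoc.IH by blast
  then show ?case using step_prop[OF _ v(2)] by (simp add: st_snoc current_snoc)
qed

theorem factC1:
  shows "\<exists>\<gamma>::real. \<forall>n::nat. \<exists>A :: update list \<Rightarrow> packing.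
     (\<forall>us. valid_seq us \<and> bounded_by n us \<longrightarrow>
        feasible (current us) (A us) \<and>
        real (bins_used (current us) (A us))
          \<le> 2 * real (OPT (current us)) + 1 + log 2 (real n)) \<and>
     (\<forall>us u. valid_seq (us @ [u]) \<and> bounded_by n (us @ [u]) \<longrightarrow>
        move_cost (current us) (A us) (current (us @ [u])) (A (us @ [u]))
          \<le> \<gamma> * upd_cost (current us) u)"
proof (intro exI allI)
  fix n
  let ?J = "Jn n"
  let ?A = "\<lambda>us. pack ?J (current us) (snd (st ?J us))"
  show "(\<forall>us. valid_seq us \<and> bounded_by n us \<longrightarrow>
        feasible (current us) (?A us) \<and>
        real (bins_used (current us) (?A us))
          \<le> 2 * real (OPT (current us)) + 1 + log 2 (real n)) \<and>
     (\<forall>us u. valid_seq (us @ [u]) \<and> bounded_by n (us @ [u]) \<longrightarrow>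
        move_cost (current us) (?A us) (current (us @ [u])) (?A (us @ [u]))
          \<le> 4 * upd_cost (current us) u)"
  proof (intro conjI allI impI)
    fix us assume h: "valid_seq us \<and> bounded_by n us"
    have inv: "Inv ?J (current us) (snd (st ?J us))" using h inv_st by blast
    have "card (dom (current us)) \<le> n" using h unfolding bounded_by_def by (metis order_refl take_all)
    then show "feasible (current us) (?A us)" using feasible_pack[OF inv _ Jn_spec] by blast
    show "real (bins_used (current us) (?A us)) \<le> 2 * real (OPT (current us)) + 1 + log 2 (real n)"
      using bins_pack[OF inv] Jn_log[of n] by linarith
  next
    fix us u assume h: "valid_seq (us @ [u]) \<and> bounded_by n (us @ [u])"
    then have v: "valid_seq us" "legal (current us) u" using valid_snoc by blast+
    have inv: "Inv ?J (current us) (snd (st ?J us))" using v(1) inv_st by blast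
    show "move_cost (current us) (?A us) (current (us @ [u])) (?A (us @ [u])) \<le> 4 * upd_cost (current us) u"
      using step_prop[OF inv v(2)] by (simp add: st_snoc current_snoc)
  qed
qed


end
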